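(* Let $\mathcal{G}=(V,E)$ be a DAG with $V=[n]$, let $i,j\in V$ be distinct and $K\subseteq V\setminus\{i,j\}$ such that $K$ does not $d$-separate $i$ from $j$ in $\mathcal{G}$. Let $a,b\in[n]$ be distinct and $C\subseteq[n]\setminus\{a,b\}$. If \[ \phi_\mathcal{G}^\ast(\det\Sigma_{\{a\}\cup C,\{b\}\cup C})\in \langle \phi_\mathcal{G}^\ast(\det\Sigma_{\{i\}\cup K,\{j\}\cup K})\rangle : \Big(\prod_{S\subseteq V}\phi_\mathcal{G}^\ast(\det\Sigma_{S,S})\Big)^\infty, \] then $a\perp\!\!\!\perp b\mid C$ holds for every $\Sigma\in\mathcal{M}_{\mathcal{G},i\perp\!\!\!\perp j|K}$, i.e. $\det\Sigma_{\{a\}\cup C,\{b\}\cup C}=0$ for all such $\Sigma$.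
   Context: For a DAG $\mathcal{G}=(V,E)$ on $V=[n]$, let $\Lambda=(\lambda_{ij})$ with $\lambda_{ij}$ a free parameter if $i\to j\in E$ and $0$ otherwise, and $\Omega=\mathrm{diag}(\omega_1,\dots,\omega_n)$. Let $\phi_\mathcal{G}(\Lambda,\Omega)=(I-\Lambda)^{-T}\Omega(I-\Lambda)^{-1}$ and $\mathcal{M}_\mathcal{G}=\phi_\mathcal{G}(\mathbb{R}^E\times(0,\infty)^n)$, a set of positive definite matrices. $\mathbb{R}[\lambda,\omega]$ is the polynomial ring in the $\lambda_{ij}$ ($i\to j\in E$) and the $\omega_k$; $\phi_\mathcal{G}^\ast:\mathbb{R}[\sigma_{uv}]\to\mathbb{R}[\lambda,\omega]$ is the ring homomorphism sending $\sigma_{uv}$ to the $(u,v)$ entry of $\phi_\mathcal{G}(\Lambda,\Omega)$. $\Sigma_{A,B}$ is the submatrix with rows $A$, columns $B$. $\mathcal{M}_{\mathcal{G},i\perp\!\!\!\perp j|K}$ is the set of $\Sigma\in\mathcal{M}_\mathcal{G}$ with $\det\Sigma_{\{i\}\cup K,\{j\}\cup K}=0$. For an ideal $I$ and polynomial $g$, the saturation is $I:g^\infty=\{f: fg^k\in I\text{ for some }k\ge0\}$. $d$-separation is the standard criterion: $C$ $d$-separates $a,b$ if every path between them contains a non-collider in $C$ or a collider not in $C$ with no descendant in $C$. *)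

theory Defs
  imports Complex_Main "HOL-Library.Poly_Mapping" "HOL-Combinatorics.Permutations"
begin

text \<open>A DAG on V = [n] = {1..n}: a set of directed edges E (pairs (i,j) meaning i -> j)
  between vertices in [n], without directed cycles.\<close>

definition is_dag :: "nat \<Rightarrow> (nat \<times> nat) set \<Rightarrow> bool" where
  "is_dag n E \<longleftrightarrow> E \<subseteq> {1..n} \<times> {1..n} \<and> acyclic E"

definition adjacent :: "(nat \<times> nat) set \<Rightarrow> nat \<Rightarrow> nat \<Rightarrow> bool" where
  "adjacent E u v \<longleftrightarrow> (u, v) \<in> E \<or> (v, u) \<in> E"

definition is_path :: "(nat \<times> nat) set \<Rightarrow> nat list \<Rightarrow> nat \<Rightarrow> nat \<Rightarrow> bool" where
  "is_path E p a b \<longleftrightarrow> p \<noteq> [] \<and> hd p = a \<and> last p = b \<and> distinct p \<and>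
     (\<forall>t. Suc t < length p \<longrightarrow> adjacent E (p ! t) (p ! Suc t))"

definition is_collider :: "(nat \<times> nat) set \<Rightarrow> nat list \<Rightarrow> nat \<Rightarrow> bool" where
  "is_collider E p t \<longleftrightarrow> (p ! (t - 1), p ! t) \<in> E \<and> (p ! Suc t, p ! t) \<in> E"

definition descendants :: "(nat \<times> nat) set \<Rightarrow> nat \<Rightarrow> nat set" where
  "descendants E v = {w. (v, w) \<in> E\<^sup>*}"

definition path_blocked :: "(nat \<times> nat) set \<Rightarrow> nat set \<Rightarrow> nat list \<Rightarrow> bool" where
  "path_blocked E C p \<longleftrightarrow>
     (\<exists>t. 0 < t \<and> Suc t < length p \<and>
        ((\<not> is_collider E p t \<and> p ! t \<in> C) \<or>
         (is_collider E p t \<and> p ! t \<notin> C \<and> descendants E (p ! t) \<inter> C = {})))"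

definition d_separates :: "(nat \<times> nat) set \<Rightarrow> nat set \<Rightarrow> nat \<Rightarrow> nat \<Rightarrow> bool" where
  "d_separates E C a b \<longleftrightarrow> (\<forall>p. is_path E p a b \<longrightarrow> path_blocked E C p)"

definition mat_mult :: "nat \<Rightarrow> (nat \<Rightarrow> nat \<Rightarrow> 'a::comm_ring_1) \<Rightarrow> (nat \<Rightarrow> nat \<Rightarrow> 'a) \<Rightarrow> nat \<Rightarrow> nat \<Rightarrow> 'a" where
  "mat_mult n A B i j = (\<Sum>k\<in>{1..n}. A i k * B k j)"

definition mat_id :: "nat \<Rightarrow> nat \<Rightarrow> 'a::comm_ring_1" where
  "mat_id i j = (if i = j then 1 else 0)"

fun mat_pow :: "nat \<Rightarrow> (nat \<Rightarrow> nat \<Rightarrow> 'a::comm_ring_1) \<Rightarrow> nat \<Rightarrow> nat \<Rightarrow> nat \<Rightarrow> 'a" where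
  "mat_pow n A 0 = mat_id"
| "mat_pow n A (Suc k) = mat_mult n (mat_pow n A k) A"

text \<open>(I - Lambda)^{-1}. For Lambda supported on the edges of a DAG on [n], Lambda is nilpotent
  (Lambda^n = 0), so (I - Lambda)^{-1} is the finite Neumann sum I + Lambda + ... + Lambda^(n-1).\<close>

definition inv_I_minus :: "nat \<Rightarrow> (nat \<Rightarrow> nat \<Rightarrow> 'a::comm_ring_1) \<Rightarrow> nat \<Rightarrow> nat \<Rightarrow> 'a" where
  "inv_I_minus n L i j = (\<Sum>k<n. mat_pow n L k i j)"

text \<open>phi_G(Lambda, Omega) = (I - Lambda)^{-T} Omega (I - Lambda)^{-1}, Omega = diag(w).\<close>

definition phi :: "nat \<Rightarrow> (nat \<Rightarrow> nat \<Rightarrow> 'a::comm_ring_1) \<Rightarrow> (nat \<Rightarrow> 'a) \<Rightarrow> nat \<Rightarrow> nat \<Rightarrow> 'a" where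
  "phi n L w u v = (\<Sum>k\<in>{1..n}. inv_I_minus n L k u * w k * inv_I_minus n L k v)"

text \<open>Determinant of the submatrix with rows indexed (in order) by list rs and columns by cs
  (Leibniz formula). Choice of orderings only affects the sign.\<close>

definition minor :: "(nat \<Rightarrow> nat \<Rightarrow> 'a::comm_ring_1) \<Rightarrow> nat list \<Rightarrow> nat list \<Rightarrow> 'a" where
  "minor M rs cs = (\<Sum>p | p permutes {..<length rs}.
      of_int (sign p) * (\<Prod>t<length rs. M (rs ! t) (cs ! p t)))"

text \<open>det Sigma_{{a} u C, {b} u C}: rows a, then C in increasing order; columns b, then C.\<close>

definition ci_minor :: "(nat \<Rightarrow> nat \<Rightarrow> 'a::comm_ring_1) \<Rightarrow> nat \<Rightarrow> nat \<Rightarrow> nat set \<Rightarrow> 'a" where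
  "ci_minor M a b C = minor M (a # sorted_list_of_set C) (b # sorted_list_of_set C)"

definition principal_minor :: "(nat \<Rightarrow> nat \<Rightarrow> 'a::comm_ring_1) \<Rightarrow> nat set \<Rightarrow> 'a" where
  "principal_minor M S = minor M (sorted_list_of_set S) (sorted_list_of_set S)"

definition model :: "nat \<Rightarrow> (nat \<times> nat) set \<Rightarrow> (nat \<Rightarrow> nat \<Rightarrow> real) set" where
  "model n E = {phi n L w | L w.
      (\<forall>i j. (i, j) \<notin> E \<longrightarrow> L i j = 0) \<and> (\<forall>k\<in>{1..n}. w k > 0)}"

definition ci_model :: "nat \<Rightarrow> (nat \<times> nat) set \<Rightarrow> nat \<Rightarrow> nat \<Rightarrow> nat set \<Rightarrow> (nat \<Rightarrow> nat \<Rightarrow> real) set" where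
  "ci_model n E i j K = {S \<in> model n E. ci_minor S i j K = 0}"

text \<open>The polynomial ring R[lambda, omega]: variables lambda_ij (i -> j in E) and omega_k.\<close>

datatype var = Lam nat nat | Om nat

type_synonym rpoly = "(var \<Rightarrow>\<^sub>0 nat) \<Rightarrow>\<^sub>0 real"

definition pvar :: "var \<Rightarrow> rpoly" where
  "pvar x = Poly_Mapping.single (Poly_Mapping.single x 1) 1"

definition Lam_poly :: "(nat \<times> nat) set \<Rightarrow> nat \<Rightarrow> nat \<Rightarrow> rpoly" where
  "Lam_poly E i j = (if (i, j) \<in> E then pvar (Lam i j) else 0)"

text \<open>phi_G^*(sigma_uv): the (u,v) entry of phi_G(Lambda, Omega) with symbolic parameters;
  phi_G^* of a minor is the corresponding minor of this symbolic matrix (ring hom).\<close>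

definition phi_star :: "nat \<Rightarrow> (nat \<times> nat) set \<Rightarrow> nat \<Rightarrow> nat \<Rightarrow> rpoly" where
  "phi_star n E = phi n (Lam_poly E) (\<lambda>k. pvar (Om k))"

definition principal_ideal :: "'a::comm_ring_1 \<Rightarrow> 'a set" where
  "principal_ideal g = {q * g | q. True}"

definition saturation :: "'a::comm_ring_1 set \<Rightarrow> 'a \<Rightarrow> 'a set" where
  "saturation I g = {f. \<exists>k::nat. f * g ^ k \<in> I}"

end

theory Submission
  imports Defs "Jordan_Normal_Form.Determinant"
begin


definition mon :: "(var \<Rightarrow> real) \<Rightarrow> (var \<Rightarrow>\<^sub>0 nat) \<Rightarrow> real" where
  "mon x m = (\<Prod>v\<in>Poly_Mapping.keys m. x v ^ Poly_Mapping.lookup m v)"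

definition ev :: "(var \<Rightarrow> real) \<Rightarrow> rpoly \<Rightarrow> real" where
  "ev x p = (\<Sum>m\<in>Poly_Mapping.keys p. Poly_Mapping.lookup p m * mon x m)"

lemma mon_alt: "finite A \<Longrightarrow> Poly_Mapping.keys m \<subseteq> A \<Longrightarrow> mon x m = (\<Prod>v\<in>A. x v ^ Poly_Mapping.lookup m v)"
  unfolding mon_def by (rule prod.mono_neutral_left) (auto simp: in_keys_iff)

lemma mon_add: "mon x (m1 + m2) = mon x m1 * mon x m2"
proof -
  let ?A = "Poly_Mapping.keys m1 \<union> Poly_Mapping.keys m2"
  have f: "finite ?A" by simp
  have "mon x (m1 + m2) = (\<Prod>v\<in>?A. x v ^ Poly_Mapping.lookup (m1+m2) v)"
    by (rule mon_alt[OF f]) (simp add: keys_add)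
  also have "\<dots> = (\<Prod>v\<in>?A. x v ^ Poly_Mapping.lookup m1 v) * (\<Prod>v\<in>?A. x v ^ Poly_Mapping.lookup m2 v)"
    by (simp add: lookup_add power_add prod.distrib)
  also have "\<dots> = mon x m1 * mon x m2"
    using mon_alt[OF f, of m1] mon_alt[OF f, of m2] by simp
  finally show ?thesis .
qed

lemma ev_alt: "finite A \<Longrightarrow> Poly_Mapping.keys p \<subseteq> A \<Longrightarrow> ev x p = (\<Sum>m\<in>A. Poly_Mapping.lookup p m * mon x m)"
  unfolding ev_def by (rule sum.mono_neutral_left) (auto simp: in_keys_iff)

lemma ev_add: "ev x (p + q) = ev x p + ev x q"
proof -
  let ?A = "Poly_Mapping.keys p \<union> Poly_Mapping.keys q"
  have f: "finite ?A" by simp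
  have "ev x (p + q) = (\<Sum>m\<in>?A. Poly_Mapping.lookup (p+q) m * mon x m)"
    by (rule ev_alt[OF f]) (meson keys_add)
  also have "\<dots> = (\<Sum>m\<in>?A. Poly_Mapping.lookup p m * mon x m) + (\<Sum>m\<in>?A. Poly_Mapping.lookup q m * mon x m)"
    by (simp add: lookup_add distrib_right sum.distrib)
  also have "\<dots> = ev x p + ev x q"
    using ev_alt[OF f, of p] ev_alt[OF f, of q] by simp
  finally show ?thesis .
qed

lemma ev_single: "ev x (Poly_Mapping.single m c) = c * mon x m"
  by (cases "c = 0") (simp_all add: ev_def)

lemma ev_0: "ev x 0 = 0" by (simp add: ev_def)

lemma ev_sum: "ev x (sum f A) = (\<Sum>a\<in>A. ev x (f a))"
  by (induction A rule: infinite_finite_induct) (simp_all add: ev_0 ev_add)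

lemma poly_expand: "(p::rpoly) = (\<Sum>m\<in>Poly_Mapping.keys p. Poly_Mapping.single m (Poly_Mapping.lookup p m))"
  by (rule poly_mapping_eqI) (simp add: lookup_sum lookup_single when_def in_keys_iff
      sum.delta' split: if_splits)

lemma ev_mult: "ev x (p * q) = ev x p * ev x q"
proof -
  have "ev x (p * q) = ev x ((\<Sum>m\<in>Poly_Mapping.keys p. Poly_Mapping.single m (Poly_Mapping.lookup p m)) *
        (\<Sum>m\<in>Poly_Mapping.keys q. Poly_Mapping.single m (Poly_Mapping.lookup q m)))"
    using poly_expand[of p] poly_expand[of q] by simp
  also have "\<dots> = (\<Sum>m\<in>Poly_Mapping.keys p. \<Sum>m'\<in>Poly_Mapping.keys q. ev x (Poly_Mapping.single m (Poly_Mapping.lookup p m) * Poly_Mapping.single m' (Poly_Mapping.lookup q m')))"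
    by (simp add: sum_product ev_sum)
  also have "\<dots> = (\<Sum>m\<in>Poly_Mapping.keys p. \<Sum>m'\<in>Poly_Mapping.keys q. (Poly_Mapping.lookup p m * mon x m) * (Poly_Mapping.lookup q m' * mon x m'))"
    by (simp add: mult_single ev_single mon_add mult_ac)
  also have "\<dots> = ev x p * ev x q"
    by (simp add: ev_def sum_product)
  finally show ?thesis .
qed

lemma ev_1: "ev x 1 = 1"
  using ev_single[of x 0 1] by (simp add: mon_def)

interpretation ev_hom: comm_ring_hom "ev x"
  by unfold_locales (simp_all add: ev_add ev_mult ev_1 ev_0)

lemma ev_pvar: "ev x (pvar v) = x v"
  by (simp add: pvar_def ev_single mon_def)

context comm_ring_hom
begin

lemma hom_mat_pow: "hom (mat_pow n L k i j) = mat_pow n (\<lambda>i j. hom (L i j)) k i j"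
  by (induction k arbitrary: i j) (simp_all add: mat_id_def mat_mult_def hom_distribs)

lemma hom_inv_I_minus: "hom (inv_I_minus n L i j) = inv_I_minus n (\<lambda>i j. hom (L i j)) i j"
  by (simp add: inv_I_minus_def hom_distribs hom_mat_pow)

lemma hom_phi: "hom (phi n L w u v) = phi n (\<lambda>i j. hom (L i j)) (\<lambda>k. hom (w k)) u v"
  by (simp add: phi_def hom_distribs hom_inv_I_minus)

lemma hom_minor: "hom (minor M rs cs) = minor (\<lambda>i j. hom (M i j)) rs cs"
  by (simp add: minor_def hom_distribs)

end



lemma mat_pow_relpow:
  assumes L0: "\<And>i j. (i, j) \<notin> E \<Longrightarrow> L i j = 0"
  shows "mat_pow n L k i j \<noteq> (0::'a::comm_ring_1) \<Longrightarrow> (i, j) \<in> E ^^ k"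
proof (induction k arbitrary: i j)
  case 0
  then show ?case by (simp add: mat_id_def split: if_splits)
next
  case (Suc k)
  from Suc.prems have "(\<Sum>m\<in>{1..n}. mat_pow n L k i m * L m j) \<noteq> 0"
    by (simp add: mat_mult_def)
  then obtain m where m: "mat_pow n L k i m * L m j \<noteq> 0"
    by (meson sum.neutral)
  then have "mat_pow n L k i m \<noteq> 0" "L m j \<noteq> 0" by auto
  with Suc.IH L0 show ?case by (meson relpow_Suc_I)
qed

lemma dag_relpow_n_empty:
  assumes dag: "is_dag n E" and n: "n \<ge> 1"
  shows "(i, j) \<notin> E ^^ n"
proof
  assume "(i, j) \<in> E ^^ n"
  then obtain f where f: "f 0 = i" "f n = j" "\<forall>t<n. (f t, f (Suc t)) \<in> E"
    by (auto simp: relpow_fun_conv)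
  have Esub: "E \<subseteq> {1..n} \<times> {1..n}" and acyc: "acyclic E"
    using dag by (auto simp: is_dag_def)
  have range: "f t \<in> {1..n}" if "t \<le> n" for t
  proof (cases "t < n")
    case True then show ?thesis using f(3) Esub by blast
  next
    case False
    then have "t = n" using that by simp
    moreover have "n - 1 < n" using n by simp
    then have "(f (n - 1), f (Suc (n - 1))) \<in> E" using f(3) by blast
    then have "(f (n - 1), f n) \<in> E" using n by simp
    ultimately show ?thesis using Esub n by auto
  qed
  have "\<not> inj_on f {0..n}"
  proof
    assume "inj_on f {0..n}"
    then have "card (f ` {0..n}) = card {0..n}" by (rule card_image)
    moreover have "f ` {0..n} \<subseteq> {1..n}" using range by auto
    then have "card (f ` {0..n}) \<le> n" using card_mono[of "{1..n}"] by fastforce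
    ultimately show False by simp
  qed
  then obtain s t where st: "s \<le> n" "t \<le> n" "s \<noteq> t" "f s = f t"
    by (auto simp: inj_on_def)
  then obtain s t where st: "s < t" "t \<le> n" "f s = f t"
    by (metis linorder_neqE_nat order.strict_trans1 order_less_imp_le)
  have "(f s, f (s + d)) \<in> E ^^ d" if "s + d \<le> n" for d
    using that
  proof (induction d)
    case 0 then show ?case by simp
  next
    case (Suc d)
    then have "(f s, f (s + d)) \<in> E ^^ d" by simp
    moreover have "(f (s + d), f (Suc (s + d))) \<in> E" using f(3) Suc.prems by simp
    ultimately show ?case by auto
  qed
  from this[of "t - s"] st have "(f s, f s) \<in> E ^^ (t - s)" by simp
  then have "(f s, f s) \<in> E\<^sup>+" using st(1) by (meson trancl_power zero_less_diff)
  with acyc show False by (simp add: acyclic_def)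
qed

lemma mat_pow_n_zero:
  assumes dag: "is_dag n E" and n: "n \<ge> 1" and L0: "\<And>i j. (i, j) \<notin> E \<Longrightarrow> L i j = 0"
  shows "mat_pow n L n i j = (0::'a::comm_ring_1)"
  using mat_pow_relpow[where L=L and E=E and n=n and k=n and i=i and j=j, OF L0] dag_relpow_n_empty[OF dag n] by blast

lemma mat_mult_assoc:
  "mat_mult n (mat_mult n A B) C i j = mat_mult n A (mat_mult n B C) i j"
  unfolding mat_mult_def sum_distrib_left sum_distrib_right
  by (subst sum.swap) (simp add: mult.assoc)

lemma mat_pow_comm:
  assumes sup: "\<And>i j. L i j \<noteq> 0 \<Longrightarrow> i \<in> {1..n} \<and> j \<in> {1..n}"
  shows "mat_mult n L (mat_pow n L k) i j = mat_pow n L (Suc k) i (j::nat)"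
proof (induction k arbitrary: i j)
  case 0
  have "mat_mult n L mat_id i j = (\<Sum>k\<in>{1..n}. if k = j then L i j else 0)"
    unfolding mat_mult_def mat_id_def by (rule sum.cong) auto
  also have "\<dots> = (if j \<in> {1..n} then L i j else 0)" by (rule sum.delta) simp
  finally have 1: "mat_mult n L mat_id i j = (if j \<in> {1..n} then L i j else 0)" .
  have "mat_mult n mat_id L i j = (\<Sum>k\<in>{1..n}. if k = i then L i j else 0)"
    unfolding mat_mult_def mat_id_def by (rule sum.cong) auto
  also have "\<dots> = (if i \<in> {1..n} then L i j else 0)" by (rule sum.delta) simp
  finally have 2: "mat_mult n mat_id L i j = (if i \<in> {1..n} then L i j else 0)" .
  show ?case using 1 2 sup by auto
next
  case (Suc k)
  have "mat_mult n L (mat_pow n L (Suc k)) i j = mat_mult n (mat_mult n L (mat_pow n L k)) L i j"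
    by (simp add: mat_mult_assoc)
  also have "\<dots> = mat_mult n (mat_pow n L (Suc k)) L i j"
    using Suc.IH by (simp add: mat_mult_def)
  finally show ?case by simp
qed

lemma inv_left:
  assumes dag: "is_dag n E" and n: "n \<ge> 1" and L0: "\<And>i j. (i, j) \<notin> E \<Longrightarrow> L i j = 0"
  shows "inv_I_minus n L p q - (\<Sum>m\<in>{1..n}. L p m * inv_I_minus n L m q) = (mat_id p q :: 'a::comm_ring_1)"
proof -
  have sup: "L i j \<noteq> 0 \<Longrightarrow> i \<in> {1..n} \<and> j \<in> {1..n}" for i j
  proof -
    assume "L i j \<noteq> 0"
    then have "(i, j) \<in> E" using L0 by blast
    then show ?thesis using dag by (auto simp: is_dag_def)
  qed
  have "(\<Sum>m\<in>{1..n}. L p m * inv_I_minus n L m q) = (\<Sum>k<n. mat_mult n L (mat_pow n L k) p q)"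
    unfolding inv_I_minus_def sum_distrib_left mat_mult_def by (rule sum.swap)
  also have "\<dots> = (\<Sum>k<n. mat_pow n L (Suc k) p q)"
    using mat_pow_comm[where L=L and n=n, OF sup] by presburger
  finally have eq1: "(\<Sum>m\<in>{1..n}. L p m * inv_I_minus n L m q) = (\<Sum>k<n. mat_pow n L (Suc k) p q)" .
  have "inv_I_minus n L p q - (\<Sum>m\<in>{1..n}. L p m * inv_I_minus n L m q)
      = (\<Sum>k<n. mat_pow n L k p q) - (\<Sum>k<n. mat_pow n L (Suc k) p q)"
    unfolding eq1 by (simp only: inv_I_minus_def)
  also have "\<dots> = - (\<Sum>k<n. mat_pow n L (Suc k) p q - mat_pow n L k p q)"
    by (simp add: sum_subtractf del: mat_pow.simps)
  also have "\<dots> = mat_pow n L 0 p q - mat_pow n L n p q"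
    by (subst sum_lessThan_telescope) simp
  also have "\<dots> = mat_id p q" using mat_pow_n_zero[OF dag n L0] by simp
  finally show ?thesis .
qed



lemma principal_minor_det:
  fixes M :: "nat \<Rightarrow> nat \<Rightarrow> 'a::comm_ring_1"
  shows "principal_minor M S = det (mat (length (sorted_list_of_set S)) (length (sorted_list_of_set S))
     (\<lambda>(t,u). M (sorted_list_of_set S ! t) (sorted_list_of_set S ! u)))"
  unfolding principal_minor_def minor_def det_def
  by (auto simp: atLeast0LessThan permutes_def intro!: sum.cong prod.cong)

lemma principal_minor_nonzero:
  assumes dag: "is_dag n E" and n: "n \<ge> 1" and L0: "\<And>i j. (i, j) \<notin> E \<Longrightarrow> L i j = 0"
    and wpos: "\<forall>k\<in>{1..n}. w k > (0::real)" and S: "S \<subseteq> {1..n}"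
  shows "principal_minor (phi n L w) S \<noteq> 0"
proof
  define rs where "rs = sorted_list_of_set S"
  define kk where "kk = length rs"
  define A where "A = inv_I_minus n L"
  define Sg where "Sg = phi n L w"
  have finS: "finite S" using S finite_subset by blast
  have dist: "distinct rs" and setrs: "set rs = S" using finS by (auto simp: rs_def)
  have rsin: "rs ! t \<in> {1..n}" if "t < kk" for t
    using that S setrs nth_mem kk_def by blast
  define M where "M = mat kk kk (\<lambda>(t,u). Sg (rs ! t) (rs ! u))"
  assume "principal_minor (phi n L w) S = 0"
  then have "det M = 0" by (simp add: principal_minor_det M_def kk_def rs_def Sg_def)
  moreover have Mc: "M \<in> carrier_mat kk kk" by (simp add: M_def)
  ultimately obtain v where v: "v \<in> carrier_vec kk" "v \<noteq> 0\<^sub>v kk" "M *\<^sub>v v = 0\<^sub>v kk"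
    using det_0_iff_vec_prod_zero[OF Mc] by blast
  have H: "(\<Sum>u<kk. Sg (rs ! t) (rs ! u) * v $ u) = 0" if "t < kk" for t
  proof -
    have "(M *\<^sub>v v) $ t = 0" using v(3) that by simp
    then show ?thesis using that v(1)
      by (simp add: M_def scalar_prod_def atLeast0LessThan)
  qed
  define y where "y m = (\<Sum>u<kk. A m (rs ! u) * v $ u)" for m
  have H2: "(\<Sum>m\<in>{1..n}. A m (rs ! t) * w m * y m) = 0" if "t < kk" for t
  proof -
    have "(\<Sum>m\<in>{1..n}. A m (rs ! t) * w m * y m)
        = (\<Sum>u<kk. Sg (rs ! t) (rs ! u) * v $ u)"
      unfolding y_def Sg_def phi_def A_def sum_distrib_left sum_distrib_right
      by (subst sum.swap) (simp add: mult.assoc)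
    then show ?thesis using H that by simp
  qed
  have Q: "(\<Sum>m\<in>{1..n}. w m * y m ^ 2) = 0"
  proof -
    have "(\<Sum>m\<in>{1..n}. w m * y m ^ 2) = (\<Sum>t<kk. v $ t * (\<Sum>m\<in>{1..n}. A m (rs ! t) * w m * y m))"
      unfolding power2_eq_square
      by (subst (2) y_def, simp only: sum_distrib_left sum_distrib_right, subst sum.swap)
         (simp add: mult_ac)
    also have "\<dots> = 0" using H2 by simp
    finally show ?thesis .
  qed
  have y0: "y m = 0" if "m \<in> {1..n}" for m
  proof -
    have "\<forall>m\<in>{1..n}. w m * y m ^ 2 = 0"
    proof -
      have nn: "\<And>m. m \<in> {1..n} \<Longrightarrow> 0 \<le> w m * y m ^ 2"
        using wpos by (simp add: less_imp_le)
      show ?thesis using Q sum_nonneg_eq_0_iff[of "{1..n}" "\<lambda>m. w m * y m ^ 2"] nn by simp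
    qed
    then show ?thesis using that wpos by fastforce
  qed
  have "v $ t = 0" if t: "t < kk" for t
  proof -
    let ?p = "rs ! t"
    have p: "?p \<in> {1..n}" using rsin t by blast
    have "0 = y ?p - (\<Sum>m\<in>{1..n}. L ?p m * y m)" using y0 p by simp
    also have "\<dots> = (\<Sum>u<kk. v $ u * (A ?p (rs ! u) - (\<Sum>m\<in>{1..n}. L ?p m * A m (rs ! u))))"
      unfolding y_def sum_distrib_left right_diff_distrib sum_subtractf
      by (subst (2) sum.swap) (simp add: mult_ac sum_distrib_left)
    also have "\<dots> = (\<Sum>u<kk. v $ u * mat_id ?p (rs ! u))"
      unfolding A_def using inv_left[where L=L, OF dag n L0] by simp
    also have "\<dots> = (\<Sum>u<kk. if u = t then v $ u else 0)"
      using dist t by (intro sum.cong) (auto simp: mat_id_def nth_eq_iff_index_eq kk_def)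
    also have "\<dots> = v $ t" using t by simp
    finally show ?thesis by simp
  qed
  then have "v = 0\<^sub>v kk" using v(1) by (intro eq_vecI) auto
  with v(2) show False by simp
qed



theorem corollary3p6:
  fixes n :: nat and E :: "(nat \<times> nat) set" and i j a b :: nat and K C :: "nat set"
  assumes dag: "is_dag n E"
    and ij: "i \<in> {1..n}" "j \<in> {1..n}" "i \<noteq> j"
    and K: "K \<subseteq> {1..n} - {i, j}"
    and not_dsep: "\<not> d_separates E K i j"
    and ab: "a \<in> {1..n}" "b \<in> {1..n}" "a \<noteq> b"
    and C: "C \<subseteq> {1..n} - {a, b}"
    and mem: "ci_minor (phi_star n E) a b C \<in>
       saturation (principal_ideal (ci_minor (phi_star n E) i j K))
                  (\<Prod>S\<in>Pow {1..n}. principal_minor (phi_star n E) S)"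
  shows "\<forall>\<Sigma> \<in> ci_model n E i j K. ci_minor \<Sigma> a b C = 0"
proof
  fix Sg assume "Sg \<in> ci_model n E i j K"
  then have Sm: "Sg \<in> model n E" and h0: "ci_minor Sg i j K = 0" by (auto simp: ci_model_def)
  then obtain L w where Sg: "Sg = phi n L w" and L0: "\<forall>i j. (i, j) \<notin> E \<longrightarrow> L i j = 0"
    and wpos: "\<forall>k\<in>{1..n}. w k > 0"
    by (auto simp: model_def)
  have n: "n \<ge> 1" using ab by simp
  define x where "x v = (case v of Lam p q \<Rightarrow> L p q | Om k \<Rightarrow> w k)" for v
  have Lev: "(\<lambda>p q. ev x (Lam_poly E p q)) = L"
    using L0 by (auto simp: Lam_poly_def ev_pvar x_def ev_hom.hom_zero intro!: ext)
  have wev: "(\<lambda>k. ev x (pvar (Om k))) = w"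
    by (auto simp: ev_pvar x_def)
  have Sev: "(\<lambda>u v. ev x (phi_star n E u v)) = Sg"
    unfolding phi_star_def ev_hom.hom_phi Lev wev Sg ..
  have evm: "ev x (minor (phi_star n E) rs cs) = minor Sg rs cs" for rs cs
    unfolding ev_hom.hom_minor Sev ..
  from mem obtain kk q where eq: "ci_minor (phi_star n E) a b C *
      (\<Prod>S\<in>Pow {1..n}. principal_minor (phi_star n E) S) ^ kk = q * ci_minor (phi_star n E) i j K"
    by (auto simp: saturation_def principal_ideal_def)
  have "ci_minor Sg a b C * (\<Prod>S\<in>Pow {1..n}. principal_minor Sg S) ^ kk = ev x q * ci_minor Sg i j K"
    using arg_cong[OF eq, of "ev x"]
    by (simp add: ev_mult ev_hom.hom_power ev_hom.hom_prod ci_minor_def principal_minor_def evm)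
  then have "ci_minor Sg a b C * (\<Prod>S\<in>Pow {1..n}. principal_minor Sg S) ^ kk = 0"
    using h0 by simp
  moreover have "(\<Prod>S\<in>Pow {1..n}. principal_minor Sg S) \<noteq> 0"
    using principal_minor_nonzero[where L=L, OF dag n _ wpos] L0 unfolding Sg by auto
  ultimately show "ci_minor Sg a b C = 0" by simp
qed


end
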